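(* Let $F$ be an Archimedean vector lattice. The order convergence on $F$ is idempotent: if $(f_{\alpha})_{\alpha\in A},(g_{\beta})_{\beta\in B}\subset F_{+}$ are nets with $g_{\beta}\xrightarrow{o} 0_{F}$ and $(f_{\alpha}-g_{\beta})^{+}\xrightarrow[\alpha]{o} 0_{F}$ for every $\beta\in B$, then $f_{\alpha}\xrightarrow{o} 0_{F}$.
   Context: A net $(f_\alpha)$ in $F$ order converges to $f$ (written $f_\alpha\xrightarrow{o}f$) if there exists $G\subset F$ with $\bigwedge G=0_F$ such that for every $g\in G$ there is $\alpha_0$ with $|f_\alpha-f|\le g$ for all $\alpha\ge\alpha_0$. *)

theory Defs
  imports Main "HOL-Library.Lattice_Algebras"
begin

text \<open>A (real) vector lattice is modelled by a type of sort
  ordered_real_vector (real vector space with translation- and positive-scaling-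
  compatible order) together with lattice_ab_group_add_abs (the order is a
  lattice; the absolute value is sup x (-x)).\<close>

definition archimedean_vl :: "'a::{ordered_real_vector, lattice_ab_group_add_abs} itself \<Rightarrow> bool" where
  "archimedean_vl _ \<longleftrightarrow>
     (\<forall>x y :: 'a. 0 \<le> x \<and> (\<forall>n::nat. real n *\<^sub>R x \<le> y) \<longrightarrow> x = 0)"

definition directed_set :: "'i set \<Rightarrow> ('i \<Rightarrow> 'i \<Rightarrow> bool) \<Rightarrow> bool" where
  "directed_set A le \<longleftrightarrow> A \<noteq> {} \<and>
     (\<forall>a\<in>A. le a a) \<and>
     (\<forall>a\<in>A. \<forall>b\<in>A. \<forall>c\<in>A. le a b \<and> le b c \<longrightarrow> le a c) \<and>
     (\<forall>a\<in>A. \<forall>b\<in>A. \<exists>c\<in>A. le a c \<and> le b c)"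

text \<open>The infimum of G exists and equals x (in a possibly non-complete lattice).\<close>
definition is_infimum :: "'a::order set \<Rightarrow> 'a \<Rightarrow> bool" where
  "is_infimum G x \<longleftrightarrow> (\<forall>g\<in>G. x \<le> g) \<and> (\<forall>y. (\<forall>g\<in>G. y \<le> g) \<longrightarrow> y \<le> x)"

definition order_conv ::
  "'i set \<Rightarrow> ('i \<Rightarrow> 'i \<Rightarrow> bool) \<Rightarrow> ('i \<Rightarrow> 'a::lattice_ab_group_add_abs) \<Rightarrow> 'a \<Rightarrow> bool" where
  "order_conv A le f l \<longleftrightarrow>
     (\<exists>G. is_infimum G 0 \<and>
        (\<forall>g\<in>G. \<exists>a0\<in>A. \<forall>a\<in>A. le a0 a \<longrightarrow> \<bar>f a - l\<bar> \<le> g))"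

end

theory Submission
  imports Defs
begin

theorem proposition4p5:
  fixes f :: "'i \<Rightarrow> 'a::{ordered_real_vector, lattice_ab_group_add_abs}"
    and g :: "'j \<Rightarrow> 'a"
    and A :: "'i set" and leA :: "'i \<Rightarrow> 'i \<Rightarrow> bool"
    and B :: "'j set" and leB :: "'j \<Rightarrow> 'j \<Rightarrow> bool"
  assumes "archimedean_vl TYPE('a)"
    and "directed_set A leA"
    and "directed_set B leB"
    and "\<forall>a\<in>A. 0 \<le> f a"
    and "\<forall>b\<in>B. 0 \<le> g b"
    and "order_conv B leB g 0"
    and "\<forall>b\<in>B. order_conv A leA (\<lambda>a. pprt (f a - g b)) 0"
  shows "order_conv A leA f 0"
proof -
  define P where "P = (\<lambda>b H. is_infimum H (0::'a) \<and>
        (\<forall>h\<in>H. \<exists>a0\<in>A. \<forall>a\<in>A. leA a0 a \<longrightarrow> \<bar>pprt (f a - g b) - 0\<bar> \<le> h))"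
  define H where "H = (\<lambda>b. SOME H. P b H)"
  have HP: "P b (H b)" if "b \<in> B" for b
    unfolding H_def by (rule someI_ex) (use assms(7) that in \<open>auto simp: order_conv_def P_def\<close>)
  obtain G where G: "is_infimum G 0"
    and Gc: "\<forall>h\<in>G. \<exists>b0\<in>B. \<forall>b\<in>B. leB b0 b \<longrightarrow> \<bar>g b - 0\<bar> \<le> h"
    using assms(6) unfolding order_conv_def by blast
  have reflA: "\<forall>a\<in>A. leA a a" and reflB: "\<forall>b\<in>B. leB b b"
    using assms(2,3) unfolding directed_set_def by auto
  define K where "K = {g b + h | b h. b \<in> B \<and> h \<in> H b}"
  have Hnn: "0 \<le> h" if "b \<in> B" "h \<in> H b" for b h
  proof -
    from HP[OF that(1)] that(2) obtain a0 where "a0 \<in> A"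
      "\<forall>a\<in>A. leA a0 a \<longrightarrow> \<bar>pprt (f a - g b) - 0\<bar> \<le> h"
      unfolding P_def by blast
    then have "\<bar>pprt (f a0 - g b) - 0\<bar> \<le> h" using reflA by blast
    then show ?thesis using abs_ge_zero order_trans by blast
  qed
  have "is_infimum K 0"
    unfolding is_infimum_def
  proof (intro conjI allI impI ballI)
    fix k assume "k \<in> K"
    then obtain b h where "k = g b + h" "b \<in> B" "h \<in> H b" unfolding K_def by blast
    then show "0 \<le> k" using Hnn assms(5) by (simp add: add_nonneg_nonneg)
  next
    fix y assume y: "\<forall>k\<in>K. y \<le> k"
    have yb: "y \<le> g b" if "b \<in> B" for b
    proof -
      have "\<forall>h\<in>H b. y - g b \<le> h"
      proof
        fix h assume "h \<in> H b"
        then have "y \<le> g b + h" using y that unfolding K_def by blast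
        then show "y - g b \<le> h" by (simp add: algebra_simps)
      qed
      then have "y - g b \<le> 0" using HP[OF that] unfolding P_def is_infimum_def by blast
      then show ?thesis by simp
    qed
    have "\<forall>h\<in>G. y \<le> h"
    proof
      fix h assume "h \<in> G"
      then obtain b0 where "b0 \<in> B" "\<forall>b\<in>B. leB b0 b \<longrightarrow> \<bar>g b - 0\<bar> \<le> h" using Gc by blast
      then have "\<bar>g b0\<bar> \<le> h" using reflB by auto
      moreover have "g b0 \<le> \<bar>g b0\<bar>" by (rule abs_ge_self)
      ultimately show "y \<le> h" using yb[OF \<open>b0 \<in> B\<close>] order_trans by blast
    qed
    then show "y \<le> 0" using G unfolding is_infimum_def by blast
  qed
  moreover have "\<forall>k\<in>K. \<exists>a0\<in>A. \<forall>a\<in>A. leA a0 a \<longrightarrow> \<bar>f a - 0\<bar> \<le> k"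
  proof
    fix k assume "k \<in> K"
    then obtain b h where kb: "k = g b + h" "b \<in> B" "h \<in> H b" unfolding K_def by blast
    from HP[OF kb(2)] kb(3) obtain a0 where a0: "a0 \<in> A"
      "\<forall>a\<in>A. leA a0 a \<longrightarrow> \<bar>pprt (f a - g b) - 0\<bar> \<le> h"
      unfolding P_def by blast
    have "\<forall>a\<in>A. leA a0 a \<longrightarrow> \<bar>f a - 0\<bar> \<le> k"
    proof (intro ballI impI)
      fix a assume "a \<in> A" "leA a0 a"
      then have 1: "\<bar>pprt (f a - g b)\<bar> \<le> h" using a0 by auto
      have 2: "f a - g b \<le> pprt (f a - g b)" by (simp add: pprt_def)
      have 3: "pprt (f a - g b) \<le> \<bar>pprt (f a - g b)\<bar>" by (rule abs_ge_self)
      have "f a - g b \<le> h" using 1 2 3 order_trans by blast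
      then have "f a \<le> k" using kb(1) by (simp add: algebra_simps)
      moreover have "\<bar>f a\<bar> = f a" using assms(4) \<open>a \<in> A\<close> by simp
      ultimately show "\<bar>f a - 0\<bar> \<le> k" by simp
    qed
    then show "\<exists>a0\<in>A. \<forall>a\<in>A. leA a0 a \<longrightarrow> \<bar>f a - 0\<bar> \<le> k" using a0(1) by blast
  qed
  ultimately show ?thesis unfolding order_conv_def by blast
qed

end
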